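(* Let $\mathcal{G}$ be a Fischer space of symplectic type and let $\ell=\{a,b,c\}$ be a line. Suppose $\ell$ lies in two different complete quadrilaterals $\pi$ and $\pi'$, where $\pi$ has points $a,b,c,x,y,z$ and lines $\{a,b,c\},\{a,y,z\},\{b,x,z\},\{c,x,y\}$, and $\pi'$ has points $a,b,c,p,q,r$ and lines $\{a,b,c\},\{a,q,r\},\{b,p,r\},\{c,p,q\}$. Then exactly one of the following two cases occurs: (a) $p\sim x$, $q\sim y$, $r\sim z$, and $p\not\sim y$, $p\not\sim z$, $q\not\sim x$, $q\not\sim z$, $r\not\sim x$, $r\not\sim y$. In this case $w:=p\wedge x=q\wedge y=r\wedge z$, and $w$ is not collinear with any of $a,b,c$. (b) $p\not\sim x$, $q\not\sim y$, $r\not\sim z$, and $p\sim y$, $p\sim z$, $q\sim x$, $q\sim z$, $r\sim x$, $r\sim y$. In this case $d:=r\wedge y=q\wedge z$, $e:=r\wedge x=p\wedge z$, $f:=q\wedge x=p\wedge y$; the triples $\{a,e,f\},\{b,d,f\},\{c,d,e\}$ are lines, and the points $a,b,c,d,e,f$ form another complete quadrilateral $\pi''$ containing $\ell$.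
   Context: A 3-transposition group is a pair $(G,D)$ where $D$ is a conjugacy class of involutions generating $G$ with $de$ of order at most $3$ for all $d,e\in D$. Its Fischer space has point set $D$ and as lines the $3$-subsets consisting of the three involutions of a subgroup isomorphic to $\mathrm{Sym}(3)$. Distinct points on a common line are collinear ($p\sim q$), and $p\wedge q$ is the third point of that line. A subspace is a nonempty subset closed under $\wedge$. The subspace generated by two distinct intersecting lines is either a complete quadrilateral (6 points, 4 lines, any two lines meeting in one point, each point on two lines) or an affine plane of order $3$; the Fischer space is of symplectic type if it is always a complete quadrilateral. A complete quadrilateral in $\mathcal{G}$ means a subspace isomorphic to it. *)

theory Defs
  imports "HOL-Algebra.Algebra"
begin

definition three_transposition_group :: "('a, 'b) monoid_scheme \<Rightarrow> 'a set \<Rightarrow> bool" where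
  "three_transposition_group G D \<longleftrightarrow>
     group G \<and> D \<subseteq> carrier G \<and>
     (\<exists>d \<in> carrier G. D = {g \<otimes>\<^bsub>G\<^esub> d \<otimes>\<^bsub>G\<^esub> inv\<^bsub>G\<^esub> g | g. g \<in> carrier G}) \<and>
     (\<forall>d \<in> D. group.ord G d = 2) \<and>
     generate G D = carrier G \<and>
     (\<forall>d \<in> D. \<forall>e \<in> D. group.ord G (d \<otimes>\<^bsub>G\<^esub> e) \<in> {1, 2, 3})"

definition fischer_line :: "('a, 'b) monoid_scheme \<Rightarrow> 'a set \<Rightarrow> 'a set \<Rightarrow> bool" where
  "fischer_line G D L \<longleftrightarrow>
     L \<subseteq> D \<and> card L = 3 \<and>
     (\<exists>H. subgroup H G \<and> (G\<lparr>carrier := H\<rparr>) \<cong> sym_group 3 \<and>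
          L = {h \<in> H. group.ord G h = 2})"

definition collinear :: "('a, 'b) monoid_scheme \<Rightarrow> 'a set \<Rightarrow> 'a \<Rightarrow> 'a \<Rightarrow> bool" where
  "collinear G D p q \<longleftrightarrow> p \<noteq> q \<and> (\<exists>L. fischer_line G D L \<and> p \<in> L \<and> q \<in> L)"

definition wedge :: "('a, 'b) monoid_scheme \<Rightarrow> 'a set \<Rightarrow> 'a \<Rightarrow> 'a \<Rightarrow> 'a" where
  "wedge G D p q = (THE r. r \<noteq> p \<and> r \<noteq> q \<and> fischer_line G D {p, q, r})"

definition fischer_subspace :: "('a, 'b) monoid_scheme \<Rightarrow> 'a set \<Rightarrow> 'a set \<Rightarrow> bool" where
  "fischer_subspace G D S \<longleftrightarrow> S \<subseteq> D \<and> S \<noteq> {} \<and>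
     (\<forall>p \<in> S. \<forall>q \<in> S. collinear G D p q \<longrightarrow> wedge G D p q \<in> S)"

definition fischer_span :: "('a, 'b) monoid_scheme \<Rightarrow> 'a set \<Rightarrow> 'a set \<Rightarrow> 'a set" where
  "fischer_span G D Y = {v. \<forall>S. fischer_subspace G D S \<and> Y \<subseteq> S \<longrightarrow> v \<in> S}"

text \<open>The standard model has as
lines the four indices 0..3 and as points the 2-subsets of {0..3}; the point {i,j} lies on
lines i and j.\<close>

definition complete_quadrilateral :: "('a, 'b) monoid_scheme \<Rightarrow> 'a set \<Rightarrow> 'a set \<Rightarrow> bool" where
  "complete_quadrilateral G D S \<longleftrightarrow> fischer_subspace G D S \<and>
     (\<exists>f. bij_betw f S {P. P \<subseteq> {0..<4::nat} \<and> card P = 2} \<and>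
        (\<forall>L. (fischer_line G D L \<and> L \<subseteq> S) \<longleftrightarrow>
             (L \<subseteq> S \<and> (\<exists>i<4. f ` L = {P. P \<subseteq> {0..<4} \<and> card P = 2 \<and> i \<in> P}))))"

definition symplectic_type :: "('a, 'b) monoid_scheme \<Rightarrow> 'a set \<Rightarrow> bool" where
  "symplectic_type G D \<longleftrightarrow>
     (\<forall>L M. fischer_line G D L \<longrightarrow> fischer_line G D M \<longrightarrow> L \<noteq> M \<longrightarrow> L \<inter> M \<noteq> {} \<longrightarrow>
        complete_quadrilateral G D (fischer_span G D (L \<union> M)))"

end

theory Submission
  imports Defs
begin

definition T4 :: "nat set set" where "T4 = {P. P \<subseteq> {0..<4} \<and> card P = 2}"
definition star4 :: "nat \<Rightarrow> nat set set" where
  "star4 i = {P. P \<subseteq> {0..<4} \<and> card P = 2 \<and> i \<in> P}"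

lemma card_T4: "card T4 = 6"
proof -
  have "card T4 = (card {0..<4::nat} choose 2)" unfolding T4_def by (rule n_subsets) simp
  also have "\<dots> = 6" by (simp add: choose_two)
  finally show ?thesis .
qed

lemma T4_elem: "P \<in> T4 \<Longrightarrow> i \<in> P \<Longrightarrow> \<exists>k. P = {i,k} \<and> k \<noteq> i \<and> k < 4 \<and> i < 4"
  unfolding T4_def by (auto simp: card_2_iff)

lemma two_elem: "P \<in> T4 \<Longrightarrow> i \<in> P \<Longrightarrow> j \<in> P \<Longrightarrow> i \<noteq> j \<Longrightarrow> P = {i,j}"
  unfolding T4_def by (auto simp: card_2_iff)

lemma line_card3: "fischer_line G D L \<Longrightarrow> card L = 3" by (simp add: fischer_line_def)

lemma line_perm: "fischer_line G D A \<Longrightarrow> A = B \<Longrightarrow> fischer_line G D B" by simp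

lemma line_distinct: "fischer_line G D {a,b,c} \<Longrightarrow> a\<noteq>b \<and> a\<noteq>c \<and> b\<noteq>c"
  by (drule line_card3) (auto simp: card_insert_if split: if_splits)

lemma line_third: "fischer_line G D L \<Longrightarrow> u\<in>L \<Longrightarrow> v\<in>L \<Longrightarrow> u\<noteq>v \<Longrightarrow>
   \<exists>m. L = {u,v,m} \<and> m\<noteq>u \<and> m\<noteq>v"
  by (drule line_card3) (auto simp: card_3_iff)

lemma col_intro: "fischer_line G D L \<Longrightarrow> u\<in>L \<Longrightarrow> v\<in>L \<Longrightarrow> u\<noteq>v \<Longrightarrow> collinear G D u v"
  by (auto simp: collinear_def)

lemma col_sym: "collinear G D u v \<Longrightarrow> collinear G D v u"
  by (auto simp: collinear_def)

lemma col_third: "collinear G D u v \<Longrightarrow> \<exists>m. fischer_line G D {u,v,m} \<and> m\<noteq>u \<and> m\<noteq>v"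
  unfolding collinear_def by (metis line_third)

lemma span_sup: "Y \<subseteq> fischer_span G D Y" by (auto simp: fischer_span_def)

lemma cq_obtain: "complete_quadrilateral G D S \<Longrightarrow> \<exists>f. bij_betw f S T4 \<and>
   (\<forall>L. (fischer_line G D L \<and> L \<subseteq> S) \<longleftrightarrow> (L \<subseteq> S \<and> (\<exists>i<4. f ` L = star4 i)))"
  by (simp add: complete_quadrilateral_def T4_def star4_def)

lemma cq_card: assumes "complete_quadrilateral G D S" shows "card S = 6 \<and> finite S"
proof -
  obtain f where "bij_betw f S T4" using cq_obtain[of G D S] assms by blast
  moreover have "finite T4" unfolding T4_def by (rule finite_subset[of _ "Pow {0..<4}"]) auto
  ultimately show ?thesis using card_T4 bij_betw_same_card bij_betw_finite by metis
qed

context fixes G :: "('a, 'b) monoid_scheme" and D :: "'a set"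
  assumes sym: "symplectic_type G D"
begin

lemma cq_span: "fischer_line G D L \<Longrightarrow> fischer_line G D M \<Longrightarrow> L\<noteq>M \<Longrightarrow> L\<inter>M\<noteq>{} \<Longrightarrow>
   complete_quadrilateral G D (fischer_span G D (L\<union>M))"
  using sym by (simp add: symplectic_type_def)

lemma U: assumes L: "fischer_line G D L" and M: "fischer_line G D M"
  and "p\<in>L" "p\<in>M" "q\<in>L" "q\<in>M" "p\<noteq>q" shows "L = M"
proof (rule ccontr)
  assume ne: "L \<noteq> M"
  define S where "S = fischer_span G D (L\<union>M)"
  have cq: "complete_quadrilateral G D S" unfolding S_def using cq_span[OF L M ne] assms by blast
  obtain f where bij: "bij_betw f S T4" and ln: "\<And>L. (fischer_line G D L \<and> L \<subseteq> S) \<longleftrightarrow> (L \<subseteq> S \<and> (\<exists>i<4. f ` L = star4 i))"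
    using cq_obtain[OF cq] by blast
  have LS: "L \<subseteq> S" and MS: "M \<subseteq> S" using span_sup[of "L\<union>M" G D] S_def by auto
  obtain i where i: "f ` L = star4 i" using ln[of L] L LS by blast
  obtain j where j: "f ` M = star4 j" using ln[of M] M MS by blast
  have inj: "inj_on f S" using bij bij_betw_def by blast
  show False
  proof (cases "i = j")
    case True
    then have "f ` L = f ` M" using i j by simp
    then show False using inj_on_image_eq_iff[OF inj LS MS] ne by blast
  next
    case False
    have "f p \<in> star4 i" "f p \<in> star4 j" "f q \<in> star4 i" "f q \<in> star4 j"
      using i j assms by blast+
    then have "f p = {i,j}" "f q = {i,j}" using False two_elem unfolding star4_def T4_def by auto
    moreover have "p \<in> S" "q \<in> S" using LS assms by auto
    ultimately have "p = q" using inj_onD[OF inj] by metis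
    then show False using assms by simp
  qed
qed

lemma wedge_eq: assumes "fischer_line G D {u,v,m}" "u\<noteq>v" "u\<noteq>m" "v\<noteq>m"
  shows "wedge G D u v = m"
  unfolding wedge_def
proof (rule the_equality)
  show "m \<noteq> u \<and> m \<noteq> v \<and> fischer_line G D {u, v, m}" using assms by auto
next
  fix r assume r: "r \<noteq> u \<and> r \<noteq> v \<and> fischer_line G D {u, v, r}"
  then have "{u,v,r} = {u,v,m}" using U[of "{u,v,r}" "{u,v,m}" u v] assms by auto
  then show "r = m" using r by auto
qed

lemma cq_closed: assumes "complete_quadrilateral G D S" "u\<in>S" "v\<in>S" "fischer_line G D {u,v,m}"
  "u\<noteq>v" "u\<noteq>m" "v\<noteq>m" shows "m \<in> S"
proof -
  have "collinear G D u v" using assms col_intro by fastforce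
  then have "wedge G D u v \<in> S" using assms(1-3)
    by (auto simp: complete_quadrilateral_def fischer_subspace_def)
  then show ?thesis using wedge_eq assms by simp
qed

end

lemma comb4: "(i::nat) < 4 \<Longrightarrow> j < 4 \<Longrightarrow> k < 4 \<Longrightarrow> k' < 4 \<Longrightarrow> l < 4 \<Longrightarrow>
  i \<noteq> j \<Longrightarrow> k \<noteq> i \<Longrightarrow> k \<noteq> j \<Longrightarrow> k' \<noteq> i \<Longrightarrow> k' \<noteq> j \<Longrightarrow> k' \<noteq> k \<Longrightarrow>
  l \<noteq> i \<Longrightarrow> l \<noteq> j \<Longrightarrow> l = k \<or> l = k'"
proof -
  assume h: "i < 4" "j < 4" "k < 4" "k' < 4" "l < 4" "i \<noteq> j" "k \<noteq> i" "k \<noteq> j" "k' \<noteq> i" "k' \<noteq> j" "k' \<noteq> k" "l \<noteq> i" "l \<noteq> j"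
  have s: "{i,j,k,k'} \<subseteq> {0..<4}" using h by auto
  have c: "card {i,j,k,k'} = 4" using h by auto
  have "{i,j,k,k'} = {0..<4}" by (rule card_subset_eq) (use s c in auto)
  then have "l \<in> {i,j,k,k'}" using h by auto
  then show ?thesis using h by auto
qed

context fixes G :: "('a, 'b) monoid_scheme" and D :: "'a set" and S f
  assumes sym: "symplectic_type G D" and cq: "complete_quadrilateral G D S"
  and bij: "bij_betw f S T4"
  and ln: "\<And>L. (fischer_line G D L \<and> L \<subseteq> S) \<longleftrightarrow> (L \<subseteq> S \<and> (\<exists>i<4. f ` L = star4 i))"
begin

lemma fT: "u \<in> S \<Longrightarrow> f u \<in> T4" using bij_betwE[OF bij] by blast

lemma finj: "u \<in> S \<Longrightarrow> v \<in> S \<Longrightarrow> u \<noteq> v \<Longrightarrow> f u \<noteq> f v"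
  using bij_betw_imp_inj_on[OF bij] inj_onD by metis

lemma idx: assumes "fischer_line G D L" "L \<subseteq> S" shows "\<exists>i<4. f ` L = star4 i \<and> (\<forall>u\<in>L. i \<in> f u)"
proof -
  obtain i where i: "i < 4" "f ` L = star4 i" using ln[of L] assms by blast
  have "\<forall>u\<in>L. i \<in> f u"
  proof
    fix u assume "u \<in> L"
    then have "f u \<in> star4 i" using i(2) by blast
    then show "i \<in> f u" unfolding star4_def by simp
  qed
  then show ?thesis using i by blast
qed

lemma col_iff: assumes uS: "u \<in> S" and vS: "v \<in> S"
  shows "collinear G D u v \<longleftrightarrow> u \<noteq> v \<and> (\<exists>i. i \<in> f u \<and> i \<in> f v)"
proof
  assume c: "collinear G D u v"
  obtain m where m: "fischer_line G D {u,v,m}" "m \<noteq> u" "m \<noteq> v" using col_third[OF c] by blast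
  have uv: "u \<noteq> v" using c unfolding collinear_def by blast
  have mS: "m \<in> S" using cq_closed[OF sym cq uS vS m(1) uv] m(2,3) by blast
  have sub: "{u,v,m} \<subseteq> S" using uS vS mS by blast
  obtain i where "\<forall>w\<in>{u,v,m}. i \<in> f w" using idx[OF m(1) sub] by blast
  then have "i \<in> f u" "i \<in> f v" by simp_all
  then show "u \<noteq> v \<and> (\<exists>i. i \<in> f u \<and> i \<in> f v)" using uv by blast
next
  assume "u \<noteq> v \<and> (\<exists>i. i \<in> f u \<and> i \<in> f v)"
  then obtain i where uv: "u \<noteq> v" and i: "i \<in> f u" "i \<in> f v" by blast
  have "f u \<in> T4" using fT[OF uS] .
  then have i4: "i < 4" using i unfolding T4_def by auto
  define K where "K = {s\<in>S. i \<in> f s}"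
  have KS: "K \<subseteq> S" unfolding K_def by blast
  have "f ` K = star4 i"
  proof
    show "f ` K \<subseteq> star4 i"
    proof
      fix P assume "P \<in> f ` K"
      then obtain s where s: "s \<in> S" "i \<in> f s" "P = f s" unfolding K_def by blast
      have "f s \<in> T4" using fT[OF s(1)] .
      then show "P \<in> star4 i" using s unfolding star4_def T4_def by simp
    qed
  next
    show "star4 i \<subseteq> f ` K"
    proof
      fix P assume P: "P \<in> star4 i"
      then have "P \<in> T4" unfolding star4_def T4_def by simp
      then have "P \<in> f ` S" using bij_betw_imp_surj_on[OF bij] by simp
      then obtain s where s: "s \<in> S" "P = f s" by blast
      have "i \<in> P" using P unfolding star4_def by simp
      then have "s \<in> K" using s unfolding K_def by simp
      then show "P \<in> f ` K" using s(2) by blast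
    qed
  qed
  then have "fischer_line G D K" using ln[of K] i4 KS by blast
  moreover have "u \<in> K" "v \<in> K" using uS vS i unfolding K_def by auto
  ultimately show "collinear G D u v" using col_intro uv by metis
qed

end

context fixes G :: "('a, 'b) monoid_scheme" and D :: "'a set"
  assumes sym: "symplectic_type G D"
begin

lemma lemP: assumes l: "fischer_line G D {a,b,c}" and p: "p \<notin> {a,b,c}" and pa: "collinear G D p a"
  shows "collinear G D p b \<longleftrightarrow> \<not> collinear G D p c"
proof -
  have dl: "a\<noteq>b" "a\<noteq>c" "b\<noteq>c" using line_distinct[OF l] by auto
  obtain p' where K: "fischer_line G D {a,p,p'}" "p'\<noteq>a" "p'\<noteq>p"
    using col_third[OF col_sym[OF pa]] by blast
  have ne: "{a,b,c} \<noteq> {a,p,p'}" using p by auto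
  define S where "S = fischer_span G D ({a,b,c} \<union> {a,p,p'})"
  have cq: "complete_quadrilateral G D S" unfolding S_def using cq_span[OF sym l K(1) ne] by blast
  obtain f where bij: "bij_betw f S T4" and ln: "\<And>L. (fischer_line G D L \<and> L \<subseteq> S) \<longleftrightarrow> (L \<subseteq> S \<and> (\<exists>i<4. f ` L = star4 i))"
    using cq_obtain[OF cq] by blast
  have sub: "{a,b,c,p,p'} \<subseteq> S" using span_sup[of "{a,b,c} \<union> {a,p,p'}" G D] S_def by auto
  obtain i where i: "i<4" "f ` {a,b,c} = star4 i" "\<forall>u\<in>{a,b,c}. i \<in> f u"
    using idx[OF sym cq bij ln l] sub by auto
  obtain j where j: "j<4" "f ` {a,p,p'} = star4 j" "\<forall>u\<in>{a,p,p'}. j \<in> f u"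
    using idx[OF sym cq bij ln K(1)] sub by auto
  have inj: "inj_on f S" using bij bij_betw_def by blast
  have ij: "i \<noteq> j"
  proof
    assume "i = j"
    then have "f ` {a,b,c} = f ` {a,p,p'}" using i j by simp
    then show False using inj_on_image_eq_iff[OF inj] sub ne by (metis insert_subset)
  qed
  have aS: "a \<in> S" using sub by auto
  have fa: "f a = {i,j}" by (rule two_elem[OF fT[OF sym cq bij ln aS]]) (use i j ij in auto)
  have bS: "b \<in> S" and cS: "c \<in> S" and pS: "p \<in> S" using sub by auto
  obtain k where fb: "f b = {i,k}" "k \<noteq> i" "k < 4"
    using T4_elem[OF fT[OF sym cq bij ln bS], of i] i(3) by auto
  obtain k' where fc: "f c = {i,k'}" "k' \<noteq> i" "k' < 4"
    using T4_elem[OF fT[OF sym cq bij ln cS], of i] i(3) by auto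
  obtain l where fp: "f p = {j,l}" "l \<noteq> j" "l < 4"
    using T4_elem[OF fT[OF sym cq bij ln pS], of j] j(3) by auto
  have "f a \<noteq> f b" "f a \<noteq> f c" "f b \<noteq> f c" "f p \<noteq> f a"
    using finj[OF sym cq bij ln] aS bS cS pS dl p by auto
  then have nn: "k \<noteq> j" "k' \<noteq> j" "k' \<noteq> k" "l \<noteq> i" using fa fb fc fp ij by (auto simp: doubleton_eq_iff)
  have lk: "l = k \<or> l = k'" by (rule comb4[of i j k k' l]) (use i(1) j(1) fb(2,3) fc(2,3) fp(2,3) ij nn in auto)
  have pb: "p \<noteq> b" "p \<noteq> c" using p by auto
  have cb: "collinear G D p b \<longleftrightarrow> l = k"
    unfolding col_iff[OF sym cq bij ln pS bS] fp(1) fb(1) using pb ij nn fb(2) fp(2) by auto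
  have cc: "collinear G D p c \<longleftrightarrow> l = k'"
    unfolding col_iff[OF sym cq bij ln pS cS] fp(1) fc(1) using pb ij nn fc(2) fp(2) by auto
  show ?thesis using cb cc lk nn by auto
qed


lemma pasch: assumes L1: "fischer_line G D {p,u,v}" and L2: "fischer_line G D {p,s,t}"
  and ne: "{p,u,v} \<noteq> {p,s,t}" and M: "fischer_line G D {u,s,m}"
  shows "fischer_line G D {v,t,m}"
proof -
  have d1: "p\<noteq>u" "p\<noteq>v" "u\<noteq>v" using line_distinct[OF L1] by auto
  have d2: "p\<noteq>s" "p\<noteq>t" "s\<noteq>t" using line_distinct[OF L2] by auto
  have dm: "u\<noteq>s" "u\<noteq>m" "s\<noteq>m" using line_distinct[OF M] by auto
  have sv: "s \<noteq> v"
  proof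
    assume "s = v"
    then have "{p,u,v} = {p,s,t}" using U[OF sym L1 L2, of p v] d1 by auto
    then show False using ne by simp
  qed
  have tu: "t \<noteq> u"
  proof
    assume "t = u"
    then have "{p,u,v} = {p,s,t}" using U[OF sym L1 L2, of p u] d1 by auto
    then show False using ne by simp
  qed
  have tv: "t \<noteq> v"
  proof
    assume "t = v"
    then have "{p,u,v} = {p,s,t}" using U[OF sym L1 L2, of p v] d1 by auto
    then show False using ne by simp
  qed
  define S where "S = fischer_span G D ({p,u,v} \<union> {p,s,t})"
  have cq: "complete_quadrilateral G D S" unfolding S_def using cq_span[OF sym L1 L2 ne] by blast
  obtain f where bij: "bij_betw f S T4" and ln: "\<And>L. (fischer_line G D L \<and> L \<subseteq> S) \<longleftrightarrow> (L \<subseteq> S \<and> (\<exists>i<4. f ` L = star4 i))"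
    using cq_obtain[OF cq] by blast
  have sub: "{p,u,v,s,t} \<subseteq> S" using span_sup[of "{p,u,v} \<union> {p,s,t}" G D] S_def by auto
  have pS: "p \<in> S" and uS: "u \<in> S" and vS: "v \<in> S" and sS: "s \<in> S" and tS: "t \<in> S" using sub by auto
  obtain i where i: "i<4" "f ` {p,u,v} = star4 i" "\<forall>w\<in>{p,u,v}. i \<in> f w"
    using idx[OF sym cq bij ln L1] sub by auto
  obtain j where j: "j<4" "f ` {p,s,t} = star4 j" "\<forall>w\<in>{p,s,t}. j \<in> f w"
    using idx[OF sym cq bij ln L2] sub by auto
  have inj: "inj_on f S" using bij bij_betw_def by blast
  have ij: "i \<noteq> j"
  proof
    assume "i = j"
    then have "f ` {p,u,v} = f ` {p,s,t}" using i j by simp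
    then show False using inj_on_image_eq_iff[OF inj] sub ne by (metis insert_subset)
  qed
  have fp: "f p = {i,j}" by (rule two_elem[OF fT[OF sym cq bij ln pS]]) (use i j ij in auto)
  obtain k where fu: "f u = {i,k}" "k \<noteq> i" "k < 4"
    using T4_elem[OF fT[OF sym cq bij ln uS], of i] i(3) by auto
  obtain k' where fv: "f v = {i,k'}" "k' \<noteq> i" "k' < 4"
    using T4_elem[OF fT[OF sym cq bij ln vS], of i] i(3) by auto
  obtain l where fs: "f s = {j,l}" "l \<noteq> j" "l < 4"
    using T4_elem[OF fT[OF sym cq bij ln sS], of j] j(3) by auto
  obtain l' where ft: "f t = {j,l'}" "l' \<noteq> j" "l' < 4"
    using T4_elem[OF fT[OF sym cq bij ln tS], of j] j(3) by auto
  have "f p \<noteq> f u" "f p \<noteq> f v" "f u \<noteq> f v" "f p \<noteq> f s" "f p \<noteq> f t" "f s \<noteq> f t"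
    using finj[OF sym cq bij ln] pS uS vS sS tS d1 d2 by auto
  then have nn: "k \<noteq> j" "k' \<noteq> j" "k' \<noteq> k" "l \<noteq> i" "l' \<noteq> i" "l' \<noteq> l"
    using fp fu fv fs ft ij by (auto simp: doubleton_eq_iff)
  have cus: "collinear G D u s" using col_intro[OF M] dm by auto
  then have "\<exists>n. n \<in> f u \<and> n \<in> f s" using col_iff[OF sym cq bij ln uS sS] by blast
  then have kl: "l = k" unfolding fu(1) fs(1) using ij nn fu(2) fs(2) by auto
  have "l' = k \<or> l' = k'" by (rule comb4[of i j k k' l']) (use i(1) j(1) fu(2,3) fv(2,3) ft(2,3) ij nn in auto)
  then have lk': "l' = k'" using kl nn by auto
  have mS: "m \<in> S" using cq_closed[OF sym cq uS sS M] dm by blast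
  have subM: "{u,s,m} \<subseteq> S" using uS sS mS by blast
  obtain n where "\<forall>w\<in>{u,s,m}. n \<in> f w" using idx[OF sym cq bij ln M subM] by blast
  then have n: "n \<in> f u" "n \<in> f s" "n \<in> f m" by simp_all
  have nk: "n = k" using n(1,2) unfolding fu(1) fs(1) kl using ij nn fu(2) by auto
  obtain o1 where fm: "f m = {k,o1}" "o1 \<noteq> k" "o1 < 4"
    using T4_elem[OF fT[OF sym cq bij ln mS], of k] n(3) nk by auto
  have "f m \<noteq> f u" "f m \<noteq> f s" using finj[OF sym cq bij ln] mS uS sS dm by auto
  then have "o1 \<noteq> i" "o1 \<noteq> j" unfolding fm(1) fu(1) fs(1) kl using ij nn fu(2) by (auto simp: doubleton_eq_iff)
  then have "o1 = k \<or> o1 = k'" using comb4[of i j k k' o1] i(1) j(1) fu(2,3) fv(2,3) fm(3) ij nn by blast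
  then have o1: "o1 = k'" using fm(2) by simp
  have vt: "v \<noteq> t" using tv by simp
  have cvt: "collinear G D v t"
    using col_iff[OF sym cq bij ln vS tS] vt unfolding fv(1) ft(1) lk' by blast
  obtain m' where m': "fischer_line G D {v,t,m'}" "m' \<noteq> v" "m' \<noteq> t" using col_third[OF cvt] by blast
  have m'S: "m' \<in> S" using cq_closed[OF sym cq vS tS m'(1) vt] m'(2,3) by blast
  have subM': "{v,t,m'} \<subseteq> S" using vS tS m'S by blast
  obtain n' where "\<forall>w\<in>{v,t,m'}. n' \<in> f w" using idx[OF sym cq bij ln m'(1) subM'] by blast
  then have n': "n' \<in> f v" "n' \<in> f t" "n' \<in> f m'" by simp_all
  have nk': "n' = k'" using n'(1,2) unfolding fv(1) ft(1) lk' using ij nn fv(2) by auto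
  obtain o2 where fm': "f m' = {k',o2}" "o2 \<noteq> k'" "o2 < 4"
    using T4_elem[OF fT[OF sym cq bij ln m'S], of k'] n'(3) nk' by auto
  have "f m' \<noteq> f v" "f m' \<noteq> f t" using finj[OF sym cq bij ln] m'S vS tS m' by auto
  then have "o2 \<noteq> i" "o2 \<noteq> j" unfolding fm'(1) fv(1) ft(1) lk' using ij nn fv(2) by (auto simp: doubleton_eq_iff)
  then have "o2 = k \<or> o2 = k'" using comb4[of i j k k' o2] i(1) j(1) fu(2,3) fv(2,3) fm'(3) ij nn by blast
  then have o2: "o2 = k" using fm'(2) by simp
  have "f m' = f m" using fm fm' o1 o2 by auto
  then have "m' = m" using finj[OF sym cq bij ln m'S mS] by blast
  then show ?thesis using m'(1) by simp
qed

lemma quad6: assumes l1: "fischer_line G D {a,b,c}" and l2: "fischer_line G D {a,e,f}"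
  and ne: "{a,b,c} \<noteq> {a,e,f}" and l3: "fischer_line G D {b,d,f}" and l4: "fischer_line G D {c,d,e}"
  shows "complete_quadrilateral G D {a,b,c,d,e,f}"
proof -
  have d1: "a\<noteq>b" "a\<noteq>c" "b\<noteq>c" using line_distinct[OF l1] by auto
  have d2: "a\<noteq>e" "a\<noteq>f" "e\<noteq>f" using line_distinct[OF l2] by auto
  have d3: "b\<noteq>d" "b\<noteq>f" "d\<noteq>f" using line_distinct[OF l3] by auto
  have d4: "c\<noteq>d" "c\<noteq>e" "d\<noteq>e" using line_distinct[OF l4] by auto
  have eb: "e \<noteq> b"
  proof
    assume "e = b" then have "{a,b,c} = {a,e,f}" using U[OF sym l1 l2, of a b] d1 by auto
    then show False using ne by simp
  qed
  have ec: "e \<noteq> c"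
  proof
    assume "e = c" then have "{a,b,c} = {a,e,f}" using U[OF sym l1 l2, of a c] d1 by auto
    then show False using ne by simp
  qed
  have fb: "f \<noteq> b"
  proof
    assume "f = b" then have "{a,b,c} = {a,e,f}" using U[OF sym l1 l2, of a b] d1 by auto
    then show False using ne by simp
  qed
  have fc: "f \<noteq> c"
  proof
    assume "f = c" then have "{a,b,c} = {a,e,f}" using U[OF sym l1 l2, of a c] d1 by auto
    then show False using ne by simp
  qed
  have da: "d \<noteq> a"
  proof
    assume "d = a" then have "{b,d,f} = {a,b,c}" using U[OF sym l3 l1, of a b] d1 by auto
    then have "f \<in> {a,b,c}" by auto
    then show False using d2 fb fc by auto
  qed
  define S where "S = fischer_span G D ({a,b,c} \<union> {a,e,f})"
  have cq: "complete_quadrilateral G D S" unfolding S_def using cq_span[OF sym l1 l2 ne] by blast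
  have sub: "{a,b,c,e,f} \<subseteq> S" using span_sup[of "{a,b,c} \<union> {a,e,f}" G D] S_def by auto
  have l3': "fischer_line G D {b,f,d}" using l3 by (simp add: insert_commute)
  have "d \<in> S" using cq_closed[OF sym cq _ _ l3'] sub d3 by auto
  then have sub2: "{a,b,c,d,e,f} \<subseteq> S" using sub by auto
  have cS: "card S = 6" "finite S" using cq_card[OF cq] by auto
  have "card {a,b,c,d,e,f} = 6" using d1 d2 d3 d4 eb ec fb fc da by auto
  then have "{a,b,c,d,e,f} = S" using card_subset_eq[OF cS(2) sub2] cS(1) by simp
  then show ?thesis using cq by simp
qed

end

theorem proposition5p20:
  fixes G :: "('a, 'b) monoid_scheme" and D :: "'a set"
    and a b c x y z p q r :: 'a
  assumes "three_transposition_group G D"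
    and "symplectic_type G D"
    and "complete_quadrilateral G D {a, b, c, x, y, z}"
    and "fischer_line G D {a, b, c}" and "fischer_line G D {a, y, z}"
    and "fischer_line G D {b, x, z}" and "fischer_line G D {c, x, y}"
    and "complete_quadrilateral G D {a, b, c, p, q, r}"
    and "fischer_line G D {a, q, r}"
    and "fischer_line G D {b, p, r}" and "fischer_line G D {c, p, q}"
    and "{a, b, c, x, y, z} \<noteq> {a, b, c, p, q, r}"
  shows
    "let col = collinear G D; w = wedge G D;
         A = (col p x \<and> col q y \<and> col r z \<and>
              \<not> col p y \<and> \<not> col p z \<and> \<not> col q x \<and> \<not> col q z \<and> \<not> col r x \<and> \<not> col r y \<and>
              w p x = w q y \<and> w q y = w r z \<and>
              \<not> col (w p x) a \<and> \<not> col (w p x) b \<and> \<not> col (w p x) c);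
         B = (\<not> col p x \<and> \<not> col q y \<and> \<not> col r z \<and>
              col p y \<and> col p z \<and> col q x \<and> col q z \<and> col r x \<and> col r y \<and>
              w r y = w q z \<and> w r x = w p z \<and> w q x = w p y \<and>
              (let d = w r y; e = w r x; f = w q x in
                 fischer_line G D {a, e, f} \<and> fischer_line G D {b, d, f} \<and>
                 fischer_line G D {c, d, e} \<and>
                 complete_quadrilateral G D {a, b, c, d, e, f}))
     in (A \<or> B) \<and> \<not> (A \<and> B)"
proof -
  have sym: "symplectic_type G D" using assms(2) .
  note l_abc = assms(4) and l_ayz = assms(5) and l_bxz = assms(6) and l_cxy = assms(7)
  note l_aqr = assms(9) and l_bpr = assms(10) and l_cpq = assms(11)
  have "card {a,b,c,x,y,z} = 6" using cq_card[OF assms(3)] by simp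
  then have "card (set [a,b,c,x,y,z]) = length [a,b,c,x,y,z]" by simp
  then have "distinct [a,b,c,x,y,z]" by (rule card_distinct)
  then have d1: "a\<noteq>b" "a\<noteq>c" "b\<noteq>c" "a\<noteq>x" "a\<noteq>y" "a\<noteq>z" "b\<noteq>x" "b\<noteq>y" "b\<noteq>z"
    "c\<noteq>x" "c\<noteq>y" "c\<noteq>z" "x\<noteq>y" "x\<noteq>z" "y\<noteq>z" by auto
  have "card {a,b,c,p,q,r} = 6" using cq_card[OF assms(8)] by simp
  then have "card (set [a,b,c,p,q,r]) = length [a,b,c,p,q,r]" by simp
  then have "distinct [a,b,c,p,q,r]" by (rule card_distinct)
  then have d2: "a\<noteq>p" "a\<noteq>q" "a\<noteq>r" "b\<noteq>p" "b\<noteq>q" "b\<noteq>r"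
    "c\<noteq>p" "c\<noteq>q" "c\<noteq>r" "p\<noteq>q" "p\<noteq>r" "q\<noteq>r" by auto
  have cc: "\<And>u v. collinear G D u v = collinear G D v u" by (metis col_sym)
  have l_xbz: "fischer_line G D {x,b,z}" by (rule line_perm[OF l_bxz]) auto
  have l_xcy: "fischer_line G D {x,c,y}" by (rule line_perm[OF l_cxy]) auto
  have l_yaz: "fischer_line G D {y,a,z}" by (rule line_perm[OF l_ayz]) auto
  have l_zya: "fischer_line G D {z,y,a}" by (rule line_perm[OF l_ayz]) auto
  have l_zxb: "fischer_line G D {z,x,b}" by (rule line_perm[OF l_bxz]) auto
  have l_yxc: "fischer_line G D {y,x,c}" by (rule line_perm[OF l_cxy]) auto
  have l_bac: "fischer_line G D {b,a,c}" by (rule line_perm[OF l_abc]) auto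
  have l_cab: "fischer_line G D {c,a,b}" by (rule line_perm[OF l_abc]) auto
  have l_pbr: "fischer_line G D {p,b,r}" by (rule line_perm[OF l_bpr]) auto
  have l_pcq: "fischer_line G D {p,c,q}" by (rule line_perm[OF l_cpq]) auto
  have l_qcp: "fischer_line G D {q,c,p}" by (rule line_perm[OF l_cpq]) auto
  have l_rbp: "fischer_line G D {r,b,p}" by (rule line_perm[OF l_bpr]) auto
  have l_azy: "fischer_line G D {a,z,y}" by (rule line_perm[OF l_ayz]) auto
  have l_arq: "fischer_line G D {a,r,q}" by (rule line_perm[OF l_aqr]) auto
  have l_raq: "fischer_line G D {r,a,q}" by (rule line_perm[OF l_aqr]) auto
  have c_ab: "collinear G D a b" and c_ac: "collinear G D a c" and c_ay: "collinear G D a y" and c_az: "collinear G D a z"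
    and c_bx: "collinear G D b x" and c_bz: "collinear G D b z" and c_cx: "collinear G D c x" and c_cy: "collinear G D c y"
    and c_bc: "collinear G D b c" and c_xy: "collinear G D x y" and c_xz: "collinear G D x z" and c_yz: "collinear G D y z"
    using col_intro[OF l_abc] col_intro[OF l_ayz] col_intro[OF l_bxz] col_intro[OF l_cxy] d1 by auto
  have c_aq: "collinear G D a q" and c_ar: "collinear G D a r" and c_bp: "collinear G D b p" and c_br: "collinear G D b r"
    and c_cp: "collinear G D c p" and c_cq: "collinear G D c q" and c_pq: "collinear G D p q" and c_pr: "collinear G D p r" and c_qr: "collinear G D q r"
    using col_intro[OF l_aqr] col_intro[OF l_bpr] col_intro[OF l_cpq] d2 by auto
  have n_ax: "\<not> collinear G D a x"
  proof -
    have "collinear G D a x \<longleftrightarrow> \<not> collinear G D a z" by (rule lemP[OF sym l_bxz]) (use d1 c_ab in auto)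
    then show ?thesis using c_az by blast
  qed
  have n_by: "\<not> collinear G D b y"
  proof -
    have "collinear G D b y \<longleftrightarrow> \<not> collinear G D b z" by (rule lemP[OF sym l_ayz]) (use d1 c_ab cc in auto)
    then show ?thesis using c_bz by blast
  qed
  have n_cz: "\<not> collinear G D c z"
  proof -
    have "collinear G D c z \<longleftrightarrow> \<not> collinear G D c y" by (rule lemP[OF sym l_azy]) (use d1 c_ac cc in auto)
    then show ?thesis using c_cy by blast
  qed
  have n_ap: "\<not> collinear G D a p"
  proof -
    have "collinear G D a p \<longleftrightarrow> \<not> collinear G D a r" by (rule lemP[OF sym l_bpr]) (use d1 d2 c_ab in auto)
    then show ?thesis using c_ar by blast
  qed
  have n_bq: "\<not> collinear G D b q"
  proof -
    have "collinear G D b q \<longleftrightarrow> \<not> collinear G D b r" by (rule lemP[OF sym l_aqr]) (use d1 d2 c_ab cc in auto)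
    then show ?thesis using c_br by blast
  qed
  have n_cr: "\<not> collinear G D c r"
  proof -
    have "collinear G D c r \<longleftrightarrow> \<not> collinear G D c q" by (rule lemP[OF sym l_arq]) (use d1 d2 c_ac cc in auto)
    then show ?thesis using c_cq by blast
  qed
  have qx: "q \<noteq> x" and rx: "r \<noteq> x" using c_aq c_ar n_ax by auto
  have py: "p \<noteq> y" and ry: "r \<noteq> y" using c_bp c_br n_by by auto
  have pz: "p \<noteq> z" and qz: "q \<noteq> z" using c_cp c_cq n_cz by auto
  have px: "p \<noteq> x"
  proof
    assume e: "p = x"
    have "{b,p,r} = {b,x,z}" using U[OF sym l_bpr l_bxz, of b p] e d2 by auto
    then have "r = z" using d2 e by auto
    moreover have "{c,p,q} = {c,x,y}" using U[OF sym l_cpq l_cxy, of c p] e d2 by auto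
    then have "q = y" using d2 e by auto
    ultimately show False using assms(12) e by auto
  qed
  have qy: "q \<noteq> y"
  proof
    assume e: "q = y"
    have "{c,p,q} = {c,x,y}" using U[OF sym l_cpq l_cxy, of c q] e d2 by auto
    then have "p = x" using d2 e by auto
    then show False using px by simp
  qed
  have rz: "r \<noteq> z"
  proof
    assume e: "r = z"
    have "{b,p,r} = {b,x,z}" using U[OF sym l_bpr l_bxz, of b r] e d2 by auto
    then have "p = x" using d2 e by auto
    then show False using px by simp
  qed
  have x1: "collinear G D p x \<longleftrightarrow> \<not> collinear G D p y" by (rule lemP[OF sym l_cxy]) (use d2 px py c_cp cc in auto)
  have x2: "collinear G D p x \<longleftrightarrow> \<not> collinear G D p z" by (rule lemP[OF sym l_bxz]) (use d2 px pz c_bp cc in auto)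
  have x3: "collinear G D q x \<longleftrightarrow> \<not> collinear G D q y" by (rule lemP[OF sym l_cxy]) (use d2 qx qy c_cq cc in auto)
  have x4: "collinear G D q y \<longleftrightarrow> \<not> collinear G D q z" by (rule lemP[OF sym l_ayz]) (use d2 qy qz c_aq cc in auto)
  have x5: "collinear G D r x \<longleftrightarrow> \<not> collinear G D r z" by (rule lemP[OF sym l_bxz]) (use d2 rx rz c_br cc in auto)
  have x6: "collinear G D r y \<longleftrightarrow> \<not> collinear G D r z" by (rule lemP[OF sym l_ayz]) (use d2 ry rz c_ar cc in auto)
  have x7: "collinear G D x p \<longleftrightarrow> \<not> collinear G D x q" by (rule lemP[OF sym l_cpq]) (use d1 px qx c_cx cc in auto)
  have x8: "collinear G D x p \<longleftrightarrow> \<not> collinear G D x r" by (rule lemP[OF sym l_bpr]) (use d1 px rx c_bx cc in auto)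
  have x9: "collinear G D y p \<longleftrightarrow> \<not> collinear G D y q" by (rule lemP[OF sym l_cpq]) (use d1 py qy c_cy cc in auto)
  have x10: "collinear G D y q \<longleftrightarrow> \<not> collinear G D y r" by (rule lemP[OF sym l_aqr]) (use d1 qy ry c_ay cc in auto)
  have x11: "collinear G D z p \<longleftrightarrow> \<not> collinear G D z r" by (rule lemP[OF sym l_bpr]) (use d1 pz rz c_bz cc in auto)
  have x12: "collinear G D z q \<longleftrightarrow> \<not> collinear G D z r" by (rule lemP[OF sym l_aqr]) (use d1 qz rz c_az cc in auto)
  have y7: "collinear G D p x \<longleftrightarrow> \<not> collinear G D q x" using x7 cc[of x p] cc[of x q] by simp
  have y8: "collinear G D p x \<longleftrightarrow> \<not> collinear G D r x" using x8 cc[of x p] cc[of x r] by simp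
  have y9: "collinear G D p y \<longleftrightarrow> \<not> collinear G D q y" using x9 cc[of y p] cc[of y q] by simp
  have y10: "collinear G D q y \<longleftrightarrow> \<not> collinear G D r y" using x10 cc[of y q] cc[of y r] by simp
  have y11: "collinear G D p z \<longleftrightarrow> \<not> collinear G D r z" using x11 cc[of z p] cc[of z r] by simp
  have y12: "collinear G D q z \<longleftrightarrow> \<not> collinear G D r z" using x12 cc[of z q] cc[of z r] by simp
  have caseA: "collinear G D p x \<Longrightarrow> collinear G D q y \<and> collinear G D r z \<and> \<not> collinear G D p y \<and> \<not> collinear G D p z \<and> \<not> collinear G D q x \<and> \<not> collinear G D q z \<and> \<not> collinear G D r x \<and> \<not> collinear G D r y"
    using x1 x2 x3 x4 x5 x6 y7 y8 y9 y10 y11 y12 by blast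
  have caseB: "\<not> collinear G D p x \<Longrightarrow> \<not> collinear G D q y \<and> \<not> collinear G D r z \<and> collinear G D p y \<and> collinear G D p z \<and> collinear G D q x \<and> collinear G D q z \<and> collinear G D r x \<and> collinear G D r y"
    using x1 x2 x3 x4 x5 x6 y7 y8 y9 y10 y11 y12 by blast
  show ?thesis
  proof (cases "collinear G D p x")
    case True
    note cs = caseA[OF True]
    obtain w where lw: "fischer_line G D {p,x,w}" "w \<noteq> p" "w \<noteq> x" using col_third[OF True] by blast
    have wpx: "wedge G D p x = w" using wedge_eq[OF sym lw(1)] lw px by auto
    have ne1: "{p,x,w} \<noteq> {p,b,r}"
    proof
      assume eqq: "{p,x,w} = {p,b,r}"
      have "x \<in> {p,x,w}" by simp
      then have "x \<in> {p,b,r}" using eqq by simp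
      then show False using px d1 rx by auto
    qed
    have l_wrz: "fischer_line G D {w,r,z}" using pasch[OF sym lw(1) l_pbr ne1 l_xbz] .
    have ne2: "{p,x,w} \<noteq> {p,c,q}"
    proof
      assume eqq: "{p,x,w} = {p,c,q}"
      have "x \<in> {p,x,w}" by simp
      then have "x \<in> {p,c,q}" using eqq by simp
      then show False using px d1 qx by auto
    qed
    have l_wqy: "fischer_line G D {w,q,y}" using pasch[OF sym lw(1) l_pcq ne2 l_xcy] .
    have dw1: "w \<noteq> r" "w \<noteq> z" using line_distinct[OF l_wrz] by auto
    have dw2: "w \<noteq> q" "w \<noteq> y" using line_distinct[OF l_wqy] by auto
    have wrz: "wedge G D r z = w" by (rule wedge_eq[OF sym]) (use line_perm[OF l_wrz, of "{r,z,w}"] rz dw1 in auto)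
    have wqy: "wedge G D q y = w" by (rule wedge_eq[OF sym]) (use line_perm[OF l_wqy, of "{q,y,w}"] qy dw2 in auto)
    have wb: "w \<noteq> b"
    proof
      assume e: "w = b"
      have "x \<in> {p,x,w}" "x \<in> {b,x,z}" "w \<in> {p,x,w}" "w \<in> {b,x,z}" "x \<noteq> w" using e lw by auto
      then have eqq: "{p,x,w} = {b,x,z}" using U[OF sym lw(1) l_bxz, of x w] by blast
      have "p \<in> {p,x,w}" by simp
      then have "p \<in> {b,x,z}" using eqq by simp
      then show False using d2 px pz by auto
    qed
    have wc: "w \<noteq> c"
    proof
      assume e: "w = c"
      have "x \<in> {p,x,w}" "x \<in> {c,x,y}" "w \<in> {p,x,w}" "w \<in> {c,x,y}" "x \<noteq> w" using e lw by auto
      then have eqq: "{p,x,w} = {c,x,y}" using U[OF sym lw(1) l_cxy, of x w] by blast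
      have "p \<in> {p,x,w}" by simp
      then have "p \<in> {c,x,y}" using eqq by simp
      then show False using d2 px py by auto
    qed
    have wa: "w \<noteq> a"
    proof
      assume e: "w = a"
      have "collinear G D a x" using col_intro[OF lw(1)] e d1 by auto
      then show False using n_ax by simp
    qed
    have cwx: "collinear G D w x" using col_intro[OF lw(1)] lw by auto
    have cwz: "collinear G D w z" using col_intro[OF l_wrz] dw1 by auto
    have cwy: "collinear G D w y" using col_intro[OF l_wqy] dw2 by auto
    have nwb: "\<not> collinear G D w b"
    proof -
      have "collinear G D w b \<longleftrightarrow> \<not> collinear G D w z" by (rule lemP[OF sym l_xbz]) (use lw wb dw1 cwx in auto)
      then show ?thesis using cwz by blast
    qed
    have nwc: "\<not> collinear G D w c"
    proof -
      have "collinear G D w c \<longleftrightarrow> \<not> collinear G D w y" by (rule lemP[OF sym l_xcy]) (use lw wc dw2 cwx in auto)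
      then show ?thesis using cwy by blast
    qed
    have nwa: "\<not> collinear G D w a"
    proof -
      have "collinear G D w a \<longleftrightarrow> \<not> collinear G D w z" by (rule lemP[OF sym l_yaz]) (use wa dw1 dw2 cwy in auto)
      then show ?thesis using cwz by blast
    qed
    have A: "collinear G D p x \<and> collinear G D q y \<and> collinear G D r z \<and>
              \<not> collinear G D p y \<and> \<not> collinear G D p z \<and> \<not> collinear G D q x \<and> \<not> collinear G D q z \<and> \<not> collinear G D r x \<and> \<not> collinear G D r y \<and>
              wedge G D p x = wedge G D q y \<and> wedge G D q y = wedge G D r z \<and>
              \<not> collinear G D (wedge G D p x) a \<and> \<not> collinear G D (wedge G D p x) b \<and> \<not> collinear G D (wedge G D p x) c"
      using True cs wpx wqy wrz nwa nwb nwc by simp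
    then show ?thesis unfolding Let_def using True by blast
  next
    case False
    note cs = caseB[OF False]
    obtain d where ld: "fischer_line G D {r,y,d}" "d \<noteq> r" "d \<noteq> y" using col_third[of G D r y] cs by blast
    obtain e where le: "fischer_line G D {r,x,e}" "e \<noteq> r" "e \<noteq> x" using col_third[of G D r x] cs by blast
    obtain f where lf: "fischer_line G D {q,x,f}" "f \<noteq> q" "f \<noteq> x" using col_third[of G D q x] cs by blast
    have wry: "wedge G D r y = d" using wedge_eq[OF sym ld(1)] ld ry by auto
    have wrx: "wedge G D r x = e" using wedge_eq[OF sym le(1)] le rx by auto
    have wqx: "wedge G D q x = f" using wedge_eq[OF sym lf(1)] lf qx by auto
    have ne1: "{r,y,d} \<noteq> {r,a,q}"
    proof
      assume eqq: "{r,y,d} = {r,a,q}"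
      have "y \<in> {r,y,d}" by simp
      then have "y \<in> {r,a,q}" using eqq by simp
      then show False using ry d1 qy by auto
    qed
    have l_dqz: "fischer_line G D {d,q,z}" using pasch[OF sym ld(1) l_raq ne1 l_yaz] .
    have ne2: "{r,x,e} \<noteq> {r,b,p}"
    proof
      assume eqq: "{r,x,e} = {r,b,p}"
      have "x \<in> {r,x,e}" by simp
      then have "x \<in> {r,b,p}" using eqq by simp
      then show False using rx d1 px by auto
    qed
    have l_epz: "fischer_line G D {e,p,z}" using pasch[OF sym le(1) l_rbp ne2 l_xbz] .
    have ne3: "{q,x,f} \<noteq> {q,c,p}"
    proof
      assume eqq: "{q,x,f} = {q,c,p}"
      have "x \<in> {q,x,f}" by simp
      then have "x \<in> {q,c,p}" using eqq by simp
      then show False using qx d1 px by auto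
    qed
    have l_fpy: "fischer_line G D {f,p,y}" using pasch[OF sym lf(1) l_qcp ne3 l_xcy] .
    have dd: "d \<noteq> q" "d \<noteq> z" using line_distinct[OF l_dqz] by auto
    have de: "e \<noteq> p" "e \<noteq> z" using line_distinct[OF l_epz] by auto
    have df: "f \<noteq> p" "f \<noteq> y" using line_distinct[OF l_fpy] by auto
    have wqz: "wedge G D q z = d" by (rule wedge_eq[OF sym]) (use line_perm[OF l_dqz, of "{q,z,d}"] qz dd in auto)
    have wpz: "wedge G D p z = e" by (rule wedge_eq[OF sym]) (use line_perm[OF l_epz, of "{p,z,e}"] pz de in auto)
    have wpy: "wedge G D p y = f" by (rule wedge_eq[OF sym]) (use line_perm[OF l_fpy, of "{p,y,f}"] py df in auto)
    have fz: "f \<noteq> z"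
    proof
      assume h: "f = z"
      have "x \<in> {q,x,f}" "x \<in> {b,x,z}" "f \<in> {q,x,f}" "f \<in> {b,x,z}" "x \<noteq> f" using h lf by auto
      then have eqq: "{q,x,f} = {b,x,z}" using U[OF sym lf(1) l_bxz, of x f] by blast
      have "q \<in> {q,x,f}" by simp
      then have "q \<in> {b,x,z}" using eqq by simp
      then show False using d2 qx qz by auto
    qed
    have xd: "x \<noteq> d"
    proof
      assume h: "x = d"
      have "y \<in> {r,y,d}" "y \<in> {c,x,y}" "d \<in> {r,y,d}" "d \<in> {c,x,y}" "y \<noteq> d" using h ld d1 by auto
      then have eqq: "{r,y,d} = {c,x,y}" using U[OF sym ld(1) l_cxy, of y d] by blast
      have "r \<in> {r,y,d}" by simp
      then have "r \<in> {c,x,y}" using eqq by simp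
      then show False using d2 rx ry by auto
    qed
    have l_pze: "fischer_line G D {p,z,e}" by (rule line_perm[OF l_epz]) auto
    have l_pyf: "fischer_line G D {p,y,f}" by (rule line_perm[OF l_fpy]) auto
    have l_qzd: "fischer_line G D {q,z,d}" by (rule line_perm[OF l_dqz]) auto
    have ne4: "{p,z,e} \<noteq> {p,y,f}"
    proof
      assume eqq: "{p,z,e} = {p,y,f}"
      have "z \<in> {p,z,e}" by simp
      then have "z \<in> {p,y,f}" using eqq by simp
      then show False using pz d1 fz by auto
    qed
    have l_efa: "fischer_line G D {e,f,a}" using pasch[OF sym l_pze l_pyf ne4 l_zya] .
    have ne5: "{q,z,d} \<noteq> {q,x,f}"
    proof
      assume eqq: "{q,z,d} = {q,x,f}"
      have "x \<in> {q,x,f}" by simp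
      then have "x \<in> {q,z,d}" using eqq by simp
      then show False using qx d1 xd by auto
    qed
    have l_dfb: "fischer_line G D {d,f,b}" using pasch[OF sym l_qzd lf(1) ne5 l_zxb] .
    have ne6: "{r,y,d} \<noteq> {r,x,e}"
    proof
      assume eqq: "{r,y,d} = {r,x,e}"
      have "x \<in> {r,x,e}" by simp
      then have "x \<in> {r,y,d}" using eqq by simp
      then show False using rx d1 xd by auto
    qed
    have l_dec: "fischer_line G D {d,e,c}" using pasch[OF sym ld(1) le(1) ne6 l_yxc] .
    have l_aef: "fischer_line G D {a,e,f}" by (rule line_perm[OF l_efa]) auto
    have l_bdf: "fischer_line G D {b,d,f}" by (rule line_perm[OF l_dfb]) auto
    have l_cde: "fischer_line G D {c,d,e}" by (rule line_perm[OF l_dec]) auto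
    have ea: "e \<noteq> a"
    proof
      assume h: "e = a"
      have "collinear G D a x" using col_intro[OF le(1)] h d1 by auto
      then show False using n_ax by simp
    qed
    have eb: "e \<noteq> b"
    proof
      assume h: "e = b"
      have "x \<in> {r,x,e}" "x \<in> {b,x,z}" "e \<in> {r,x,e}" "e \<in> {b,x,z}" "x \<noteq> e" using h le by auto
      then have eqq: "{r,x,e} = {b,x,z}" using U[OF sym le(1) l_bxz, of x e] by blast
      have "r \<in> {r,x,e}" by simp
      then have "r \<in> {b,x,z}" using eqq by simp
      then show False using d2 rx rz by auto
    qed
    have ec: "e \<noteq> c"
    proof
      assume h: "e = c"
      have "x \<in> {r,x,e}" "x \<in> {c,x,y}" "e \<in> {r,x,e}" "e \<in> {c,x,y}" "x \<noteq> e" using h le by auto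
      then have eqq: "{r,x,e} = {c,x,y}" using U[OF sym le(1) l_cxy, of x e] by blast
      have "r \<in> {r,x,e}" by simp
      then have "r \<in> {c,x,y}" using eqq by simp
      then show False using d2 rx ry by auto
    qed
    have ne7: "{a,b,c} \<noteq> {a,e,f}"
    proof
      assume eqq: "{a,b,c} = {a,e,f}"
      have "e \<in> {a,e,f}" by simp
      then have "e \<in> {a,b,c}" using eqq by simp
      then show False using ea eb ec by auto
    qed
    have q6: "complete_quadrilateral G D {a,b,c,d,e,f}" using quad6[OF sym l_abc l_aef ne7 l_bdf l_cde] .
    have B: "\<not> collinear G D p x \<and> \<not> collinear G D q y \<and> \<not> collinear G D r z \<and>
              collinear G D p y \<and> collinear G D p z \<and> collinear G D q x \<and> collinear G D q z \<and> collinear G D r x \<and> collinear G D r y \<and>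
              wedge G D r y = wedge G D q z \<and> wedge G D r x = wedge G D p z \<and> wedge G D q x = wedge G D p y \<and>
              (fischer_line G D {a, wedge G D r x, wedge G D q x} \<and> fischer_line G D {b, wedge G D r y, wedge G D q x} \<and>
                 fischer_line G D {c, wedge G D r y, wedge G D r x} \<and>
                 complete_quadrilateral G D {a, b, c, wedge G D r y, wedge G D r x, wedge G D q x})"
      using cs False wry wrx wqx wqz wpz wpy l_aef l_bdf l_cde q6 by simp
    then show ?thesis unfolding Let_def using False by blast
  qed
qed

end
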